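(* For all positive integers $r$ and $N$ there exists a partition $\mathbb N=A_1\cup A_2\cup\cdots\cup A_r$ into pairwise disjoint sets such that (i) $A_i-n$ is a central set for every $1\le i\le r$ and every $1\le n\le N$; and (ii) for every $n>N$, exactly one of the sets $A_1-n,A_2-n,\dots,A_r-n$ is a central set.
   Context: $\mathbb N=\{0,1,2,\dots\}$; for $A\subseteq\mathbb N$ and $n\in\mathbb N$, $A-n=\{m\in\mathbb N: m+n\in A\}$. $\beta\mathbb N$ is the set of ultrafilters on $\mathbb N$ with addition $A\in p+q$ iff $\{n:A-n\in p\}\in q$; a minimal idempotent is a non-principal ultrafilter $p$ with $p+p=p$ lying in the smallest two-sided ideal of $\beta\mathbb N$; a set is central if it belongs to some minimal idempotent. *)

theory Defs
  imports Main
begin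

definition ultrafilter_nat :: "nat set set \<Rightarrow> bool" where
  "ultrafilter_nat p \<longleftrightarrow>
     UNIV \<in> p \<and> {} \<notin> p \<and>
     (\<forall>A B. A \<in> p \<and> A \<subseteq> B \<longrightarrow> B \<in> p) \<and>
     (\<forall>A B. A \<in> p \<and> B \<in> p \<longrightarrow> A \<inter> B \<in> p) \<and>
     (\<forall>A. A \<in> p \<or> - A \<in> p)"

definition betaN :: "nat set set set" where
  "betaN = {p. ultrafilter_nat p}"

definition shift :: "nat set \<Rightarrow> nat \<Rightarrow> nat set" where
  "shift A n = {m. m + n \<in> A}"

definition uplus :: "nat set set \<Rightarrow> nat set set \<Rightarrow> nat set set" where
  "uplus p q = {A. {n. shift A n \<in> p} \<in> q}"

definition nonprincipal :: "nat set set \<Rightarrow> bool" where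
  "nonprincipal p \<longleftrightarrow> (\<forall>n. {n} \<notin> p)"

definition two_sided_ideal :: "nat set set set \<Rightarrow> bool" where
  "two_sided_ideal I \<longleftrightarrow> I \<noteq> {} \<and> I \<subseteq> betaN \<and>
     (\<forall>p\<in>betaN. \<forall>q\<in>I. uplus p q \<in> I \<and> uplus q p \<in> I)"

definition smallest_ideal :: "nat set set set" where
  "smallest_ideal = \<Inter>{I. two_sided_ideal I}"

definition minimal_idempotent :: "nat set set \<Rightarrow> bool" where
  "minimal_idempotent p \<longleftrightarrow>
     p \<in> betaN \<and> nonprincipal p \<and> uplus p p = p \<and> p \<in> smallest_ideal"

definition central :: "nat set \<Rightarrow> bool" where
  "central A \<longleftrightarrow> (\<exists>p. minimal_idempotent p \<and> A \<in> p)"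

end

theory Submission
  imports Defs
begin


lemma uf_UNIV: "ultrafilter_nat p \<Longrightarrow> UNIV \<in> p" by (simp add: ultrafilter_nat_def)
lemma uf_empty: "ultrafilter_nat p \<Longrightarrow> {} \<notin> p" by (simp add: ultrafilter_nat_def)
lemma uf_mono: "ultrafilter_nat p \<Longrightarrow> A \<in> p \<Longrightarrow> A \<subseteq> B \<Longrightarrow> B \<in> p"
  unfolding ultrafilter_nat_def by blast
lemma uf_Int: "ultrafilter_nat p \<Longrightarrow> A \<in> p \<Longrightarrow> B \<in> p \<Longrightarrow> A \<inter> B \<in> p"
  unfolding ultrafilter_nat_def by blast
lemma uf_Int_iff: "ultrafilter_nat p \<Longrightarrow> A \<inter> B \<in> p \<longleftrightarrow> A \<in> p \<and> B \<in> p"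
  by (meson inf_le1 inf_le2 uf_Int uf_mono)
lemma uf_compl: "ultrafilter_nat p \<Longrightarrow> - A \<in> p \<longleftrightarrow> A \<notin> p"
proof -
  assume u: "ultrafilter_nat p"
  show ?thesis
  proof
    assume "- A \<in> p" show "A \<notin> p"
    proof
      assume "A \<in> p" then have "A \<inter> - A \<in> p" using \<open>- A \<in> p\<close> u uf_Int by blast
      then show False using u uf_empty by simp
    qed
  next
    assume "A \<notin> p" then show "- A \<in> p" using u unfolding ultrafilter_nat_def by blast
  qed
qed
lemma uf_eq: "ultrafilter_nat p \<Longrightarrow> ultrafilter_nat q \<Longrightarrow> p \<subseteq> q \<Longrightarrow> p = q"
  by (metis subsetI subset_antisym uf_compl in_mono)
lemma uf_disj: "ultrafilter_nat p \<Longrightarrow> A \<in> p \<Longrightarrow> B \<in> p \<Longrightarrow> A \<inter> B \<noteq> {}"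
  using uf_Int uf_empty by fastforce

lemma uf_finite_Union: "finite F \<Longrightarrow> ultrafilter_nat p \<Longrightarrow> \<Union>F \<in> p \<Longrightarrow> \<exists>A\<in>F. A \<in> p"
proof (induction F rule: finite_induct)
  case empty then show ?case using uf_empty by simp
next
  case (insert A F)
  show ?case
  proof (cases "A \<in> p")
    case True then show ?thesis by simp
  next
    case False
    then have "- A \<in> p" using insert uf_compl by blast
    then have "(A \<union> \<Union>F) \<inter> - A \<in> p" using insert uf_Int by simp
    then have "\<Union>F \<in> p" using insert(4) uf_mono[of p "(A \<union> \<Union>F) \<inter> - A" "\<Union>F"] by blast
    then show ?thesis using insert by blast
  qed
qed

lemma shift_Int: "shift (A \<inter> B) n = shift A n \<inter> shift B n" by (auto simp: shift_def)
lemma shift_compl: "shift (- A) n = - shift A n" by (auto simp: shift_def)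
lemma shift_UNIV: "shift UNIV n = UNIV" by (auto simp: shift_def)
lemma shift_empty: "shift {} n = {}" by (auto simp: shift_def)
lemma shift_mono: "A \<subseteq> B \<Longrightarrow> shift A n \<subseteq> shift B n" by (auto simp: shift_def)
lemma shift_shift: "shift (shift A n) m = shift A (m + n)" by (auto simp: shift_def add.assoc)

lemma uplus_uf:
  assumes p: "ultrafilter_nat p" and q: "ultrafilter_nat q"
  shows "ultrafilter_nat (uplus p q)"
  unfolding ultrafilter_nat_def uplus_def
proof (intro conjI allI impI; simp?)
  show "{n. shift UNIV n \<in> p} \<in> q" using p q by (simp add: shift_UNIV uf_UNIV)
  show "{n. shift {} n \<in> p} \<notin> q" using p q by (simp add: shift_empty uf_empty)
next
  fix A B assume "{n. shift A n \<in> p} \<in> q \<and> A \<subseteq> B"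
  then show "{n. shift B n \<in> p} \<in> q"
    using uf_mono[OF q] uf_mono[OF p] shift_mono by (smt (verit) mem_Collect_eq subsetI)
next
  fix A B assume "{n. shift A n \<in> p} \<in> q \<and> {n. shift B n \<in> p} \<in> q"
  then have "{n. shift A n \<in> p} \<inter> {n. shift B n \<in> p} \<in> q" using uf_Int[OF q] by blast
  moreover have "{n. shift A n \<in> p} \<inter> {n. shift B n \<in> p} = {n. shift (A \<inter> B) n \<in> p}"
    using uf_Int_iff[OF p] by (auto simp: shift_Int)
  ultimately show "{n. shift (A \<inter> B) n \<in> p} \<in> q" by simp
next
  fix A
  have "{n. shift (- A) n \<in> p} = - {n. shift A n \<in> p}"
    using uf_compl[OF p] by (auto simp: shift_compl)
  then show "{n. shift A n \<in> p} \<in> q \<or> {n. shift (- A) n \<in> p} \<in> q"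
    using uf_compl[OF q] by auto
qed

lemma uplus_assoc: "uplus (uplus p q) s = uplus p (uplus q s)"
  unfolding uplus_def shift_def by (simp add: add.assoc)

definition pr :: "nat \<Rightarrow> nat set set" where "pr n = {A. n \<in> A}"
lemma pr_uf: "ultrafilter_nat (pr n)" unfolding ultrafilter_nat_def pr_def by auto
lemma uplus_pr: "uplus p (pr n) = {A. shift A n \<in> p}" unfolding uplus_def pr_def by auto



definition filt :: "nat set set \<Rightarrow> bool" where
  "filt F \<longleftrightarrow> UNIV \<in> F \<and> {} \<notin> F \<and> (\<forall>A B. A \<in> F \<and> A \<subseteq> B \<longrightarrow> B \<in> F) \<and>
     (\<forall>A B. A \<in> F \<and> B \<in> F \<longrightarrow> A \<inter> B \<in> F)"

lemma filtD: assumes "filt F" shows "UNIV \<in> F" "{} \<notin> F" "A \<in> F \<Longrightarrow> A \<subseteq> B \<Longrightarrow> B \<in> F"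
  "A \<in> F \<Longrightarrow> B \<in> F \<Longrightarrow> A \<inter> B \<in> F"
  using assms unfolding filt_def by blast+

lemma ultra_ext:
  assumes G: "G \<noteq> {}" "{} \<notin> G" "\<And>A B. A \<in> G \<Longrightarrow> B \<in> G \<Longrightarrow> \<exists>C\<in>G. C \<subseteq> A \<inter> B"
  shows "\<exists>p. ultrafilter_nat p \<and> G \<subseteq> p"
proof -
  define F0 where "F0 = {X. \<exists>A\<in>G. A \<subseteq> X}"
  have fF0: "filt F0"
    unfolding filt_def F0_def
  proof (intro conjI allI impI)
    show "UNIV \<in> {X. \<exists>A\<in>G. A \<subseteq> X}" using G(1) by auto
    show "{} \<notin> {X. \<exists>A\<in>G. A \<subseteq> X}" using G(2) by auto
    show "\<And>A B. A \<in> {X. \<exists>A\<in>G. A \<subseteq> X} \<and> A \<subseteq> B \<Longrightarrow> B \<in> {X. \<exists>A\<in>G. A \<subseteq> X}" by auto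
    fix A B assume "A \<in> {X. \<exists>A\<in>G. A \<subseteq> X} \<and> B \<in> {X. \<exists>A\<in>G. A \<subseteq> X}"
    then obtain A' B' where "A' \<in> G" "B' \<in> G" "A' \<subseteq> A" "B' \<subseteq> B" by auto
    then obtain C where "C \<in> G" "C \<subseteq> A' \<inter> B'" using G(3) by blast
    then show "A \<inter> B \<in> {X. \<exists>A\<in>G. A \<subseteq> X}" using \<open>A' \<subseteq> A\<close> \<open>B' \<subseteq> B\<close> by blast
  qed
  define S where "S = {F. filt F \<and> F0 \<subseteq> F}"
  have "\<forall>C\<in>chains S. \<exists>U\<in>S. \<forall>X\<in>C. X \<subseteq> U"
  proof
    fix C assume C: "C \<in> chains S"
    show "\<exists>U\<in>S. \<forall>X\<in>C. X \<subseteq> U"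
    proof (cases "C = {}")
      case True then show ?thesis using fF0 S_def by auto
    next
      case False
      have CS: "C \<subseteq> S" and ch: "\<forall>A\<in>C. \<forall>B\<in>C. A \<subseteq> B \<or> B \<subseteq> A"
        using C unfolding chains_def chain_subset_def by auto
      have "filt (\<Union>C)" unfolding filt_def
      proof (intro conjI allI impI)
        show "UNIV \<in> \<Union>C" using False CS S_def filtD(1) by auto
        show "{} \<notin> \<Union>C" using CS S_def filtD(2) by auto
        show "\<And>A B. A \<in> \<Union>C \<and> A \<subseteq> B \<Longrightarrow> B \<in> \<Union>C"
        proof -
          fix A B assume "A \<in> \<Union>C \<and> A \<subseteq> B"
          then obtain Z where "Z \<in> C" "A \<in> Z" "A \<subseteq> B" by auto
          moreover then have "filt Z" using CS S_def by auto
          ultimately show "B \<in> \<Union>C" using filtD(3) by blast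
        qed
        fix A B assume "A \<in> \<Union>C \<and> B \<in> \<Union>C"
        then obtain X Y where XY: "X \<in> C" "Y \<in> C" "A \<in> X" "B \<in> Y" by auto
        then obtain Z where Z: "Z \<in> C" "A \<in> Z" "B \<in> Z" using ch by blast
        then have "filt Z" using CS S_def by auto
        then have "A \<inter> B \<in> Z" using Z filtD(4) by blast
        then show "A \<inter> B \<in> \<Union>C" using Z by blast
      qed
      moreover have "F0 \<subseteq> \<Union>C" using False CS S_def by auto
      ultimately show ?thesis using S_def by auto
    qed
  qed
  from Zorn_Lemma2[OF this] obtain M where M: "M \<in> S" and Mmax: "\<forall>X\<in>S. M \<subseteq> X \<longrightarrow> X = M" by blast
  have fM: "filt M" and F0M: "F0 \<subseteq> M" using M S_def by auto
  have "ultrafilter_nat M" unfolding ultrafilter_nat_def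
  proof (intro conjI allI)
    show "UNIV \<in> M" "{} \<notin> M" using fM filtD by auto
    show "\<And>A B. A \<in> M \<and> A \<subseteq> B \<longrightarrow> B \<in> M" using filtD(3)[OF fM] by blast
    show "\<And>A B. A \<in> M \<and> B \<in> M \<longrightarrow> A \<inter> B \<in> M" using filtD(4)[OF fM] by blast
    fix A show "A \<in> M \<or> - A \<in> M"
    proof (rule ccontr)
      assume na: "\<not> (A \<in> M \<or> - A \<in> M)"
      define M' where "M' = {X. \<exists>B\<in>M. B \<inter> A \<subseteq> X}"
      have "filt M'" unfolding filt_def M'_def
      proof (intro conjI allI impI)
        show "UNIV \<in> {X. \<exists>B\<in>M. B \<inter> A \<subseteq> X}" using fM filtD by auto
        show "{} \<notin> {X. \<exists>B\<in>M. B \<inter> A \<subseteq> X}"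
        proof
          assume "{} \<in> {X. \<exists>B\<in>M. B \<inter> A \<subseteq> X}"
          then obtain B where "B \<in> M" "B \<subseteq> - A" by auto
          then have "- A \<in> M" using filtD(3)[OF fM] by blast
          then show False using na by simp
        qed
        show "\<And>X Y. X \<in> {X. \<exists>B\<in>M. B \<inter> A \<subseteq> X} \<and> X \<subseteq> Y \<Longrightarrow> Y \<in> {X. \<exists>B\<in>M. B \<inter> A \<subseteq> X}" by auto
        fix X Y assume "X \<in> {X. \<exists>B\<in>M. B \<inter> A \<subseteq> X} \<and> Y \<in> {X. \<exists>B\<in>M. B \<inter> A \<subseteq> X}"
        then obtain B1 B2 where "B1 \<in> M" "B2 \<in> M" "B1 \<inter> A \<subseteq> X" "B2 \<inter> A \<subseteq> Y" by auto
        moreover have "B1 \<inter> B2 \<in> M" using calculation filtD(4)[OF fM] by blast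
        moreover have "(B1 \<inter> B2) \<inter> A \<subseteq> X \<inter> Y" using calculation by blast
        ultimately show "X \<inter> Y \<in> {X. \<exists>B\<in>M. B \<inter> A \<subseteq> X}" by (intro CollectI bexI)
      qed
      moreover have "M \<subseteq> M'" unfolding M'_def by blast
      ultimately have "M' \<in> S" using F0M S_def by auto
      then have "M' = M" using Mmax \<open>M \<subseteq> M'\<close> by blast
      moreover have "A \<in> M'" unfolding M'_def using filtD(1)[OF fM] by blast
      ultimately show False using na by simp
    qed
  qed
  moreover have "G \<subseteq> M" using F0M F0_def by blast
  ultimately show ?thesis by blast
qed



definition fam :: "nat set set set \<Rightarrow> nat set set" where
  "fam C = {A. \<forall>q\<in>C. A \<in> q}"

definition closedb :: "nat set set set \<Rightarrow> bool" where
  "closedb C \<longleftrightarrow> C \<subseteq> betaN \<and> (\<forall>p. ultrafilter_nat p \<longrightarrow> fam C \<subseteq> p \<longrightarrow> p \<in> C)"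

lemma betaN_iff: "p \<in> betaN \<longleftrightarrow> ultrafilter_nat p" by (simp add: betaN_def)

lemma closedbD: "closedb C \<Longrightarrow> ultrafilter_nat p \<Longrightarrow> fam C \<subseteq> p \<Longrightarrow> p \<in> C"
  unfolding closedb_def by blast

lemma closedb_uf: "closedb C \<Longrightarrow> q \<in> C \<Longrightarrow> ultrafilter_nat q"
  unfolding closedb_def betaN_def by blast

lemma fam_anti: "C \<subseteq> D \<Longrightarrow> fam D \<subseteq> fam C" unfolding fam_def by blast

lemma closedb_betaN: "closedb betaN" unfolding closedb_def by (simp add: betaN_def)

lemma UNIV_fam: "closedb X \<Longrightarrow> UNIV \<in> fam X"
  unfolding fam_def using closedb_uf uf_UNIV by blast
lemma fam_Int: "closedb X \<Longrightarrow> A \<in> fam X \<Longrightarrow> B \<in> fam X \<Longrightarrow> A \<inter> B \<in> fam X"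
  unfolding fam_def proof (safe)
  fix q assume "closedb X" "\<forall>q\<in>X. A \<in> q" "\<forall>q\<in>X. B \<in> q" "q \<in> X"
  then show "A \<inter> B \<in> q" using closedb_uf[of X q] uf_Int[of q A B] by blast
qed

lemma chain_Inter:
  assumes ne: "\<C> \<noteq> {}" and cl: "\<forall>X\<in>\<C>. closedb X \<and> X \<noteq> {}" and ch: "chain\<^sub>\<subseteq> \<C>"
  shows "closedb (\<Inter>\<C>) \<and> \<Inter>\<C> \<noteq> {}"
proof
  have clX: "closedb X" if "X \<in> \<C>" for X using cl that by blast
  have neX: "X \<noteq> {}" if "X \<in> \<C>" for X using cl that by blast
  show "closedb (\<Inter>\<C>)" unfolding closedb_def
  proof (intro conjI allI impI)
    obtain X where X: "X \<in> \<C>" using ne by blast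
    then have "X \<subseteq> betaN" using clX closedb_def by blast
    then show "\<Inter>\<C> \<subseteq> betaN" using X by blast
    fix p assume p: "ultrafilter_nat p" "fam (\<Inter>\<C>) \<subseteq> p"
    show "p \<in> \<Inter>\<C>"
    proof
      fix X assume X: "X \<in> \<C>"
      then have "\<Inter>\<C> \<subseteq> X" by blast
      then have "fam X \<subseteq> fam (\<Inter>\<C>)" by (rule fam_anti)
      then have "fam X \<subseteq> p" using p(2) by (rule order_trans)
      then show "p \<in> X" using closedbD[OF clX[OF X] p(1)] by blast
    qed
  qed
  define G where "G = (\<Union>X\<in>\<C>. fam X)"
  have "\<exists>p. ultrafilter_nat p \<and> G \<subseteq> p"
  proof (rule ultra_ext)
    obtain X where X: "X \<in> \<C>" using ne by blast
    then have "UNIV \<in> fam X" using clX UNIV_fam by blast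
    then show "G \<noteq> {}" using X unfolding G_def by blast
    show "{} \<notin> G"
    proof
      assume "{} \<in> G"
      then obtain X where X: "X \<in> \<C>" "{} \<in> fam X" unfolding G_def by blast
      obtain q where q: "q \<in> X" using neX[OF X(1)] by blast
      have "ultrafilter_nat q" using closedb_uf[OF clX[OF X(1)] q] .
      moreover have "{} \<in> q" using X(2) q unfolding fam_def by blast
      ultimately show False using uf_empty by blast
    qed
    fix A B assume "A \<in> G" "B \<in> G"
    then obtain X Y where XY: "X \<in> \<C>" "Y \<in> \<C>" "A \<in> fam X" "B \<in> fam Y" unfolding G_def by blast
    then have "X \<subseteq> Y \<or> Y \<subseteq> X" using ch unfolding chain_subset_def by blast
    then obtain Z where Z: "Z \<in> \<C>" "A \<in> fam Z" "B \<in> fam Z"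
    proof
      assume "X \<subseteq> Y" then have "fam Y \<subseteq> fam X" by (rule fam_anti)
      then show thesis using that[of X] XY by blast
    next
      assume "Y \<subseteq> X" then have "fam X \<subseteq> fam Y" by (rule fam_anti)
      then show thesis using that[of Y] XY by blast
    qed
    then have "A \<inter> B \<in> fam Z" using clX fam_Int by blast
    then show "\<exists>C\<in>G. C \<subseteq> A \<inter> B" using Z unfolding G_def by blast
  qed
  then obtain p where p: "ultrafilter_nat p" "G \<subseteq> p" by blast
  have "p \<in> \<Inter>\<C>"
  proof
    fix X assume X: "X \<in> \<C>"
    then have "fam X \<subseteq> p" using p(2) unfolding G_def by blast
    then show "p \<in> X" using closedbD[OF clX[OF X] p(1)] by blast
  qed
  then show "\<Inter>\<C> \<noteq> {}" by blast
qed

lemma min_closed: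
  assumes C0: "closedb C0" "C0 \<noteq> {}" "P C0"
  and chP: "\<And>\<C>. \<C> \<noteq> {} \<Longrightarrow> \<forall>X\<in>\<C>. closedb X \<and> X \<noteq> {} \<and> P X \<Longrightarrow> chain\<^sub>\<subseteq> \<C> \<Longrightarrow> P (\<Inter>\<C>)"
  shows "\<exists>M. M \<subseteq> C0 \<and> closedb M \<and> M \<noteq> {} \<and> P M \<and>
            (\<forall>X. X \<subseteq> M \<longrightarrow> closedb X \<longrightarrow> X \<noteq> {} \<longrightarrow> P X \<longrightarrow> X = M)"
proof -
  define S where "S = {X. X \<subseteq> C0 \<and> closedb X \<and> X \<noteq> {} \<and> P X}"
  have "\<forall>C'\<in>chains (uminus ` S). \<exists>U\<in>uminus ` S. \<forall>X\<in>C'. X \<subseteq> U"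
  proof
    fix C' assume C': "C' \<in> chains (uminus ` S)"
    define C where "C = uminus ` C'"
    have CS: "C \<subseteq> S" using C' unfolding C_def chains_def by auto
    have chC: "chain\<^sub>\<subseteq> C" using C' unfolding C_def chains_def chain_subset_def
      by (auto simp: Compl_subset_Compl_iff)
    show "\<exists>U\<in>uminus ` S. \<forall>X\<in>C'. X \<subseteq> U"
    proof (cases "C' = {}")
      case True
      have "C0 \<in> S" using C0 S_def by auto
      then show ?thesis using True by blast
    next
      case False
      then have Cne: "C \<noteq> {}" using C_def by auto
      have "\<forall>X\<in>C. closedb X \<and> X \<noteq> {} \<and> P X" using CS S_def by auto
      then have "closedb (\<Inter>C) \<and> \<Inter>C \<noteq> {} \<and> P (\<Inter>C)" using chain_Inter[OF Cne _ chC] chP[OF Cne _ chC] by blast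
      moreover have "\<Inter>C \<subseteq> C0" using Cne CS S_def by blast
      ultimately have "\<Inter>C \<in> S" using S_def by blast
      moreover have "\<forall>X\<in>C'. X \<subseteq> - \<Inter>C" using C_def by auto
      ultimately show ?thesis by blast
    qed
  qed
  from Zorn_Lemma2[OF this] obtain M' where M': "M' \<in> uminus ` S" and
    Mmax: "\<forall>X\<in>uminus ` S. M' \<subseteq> X \<longrightarrow> X = M'" by blast
  define M where "M = - M'"
  have MS: "M \<in> S" using M' M_def by auto
  have "\<forall>X. X \<subseteq> M \<longrightarrow> closedb X \<longrightarrow> X \<noteq> {} \<longrightarrow> P X \<longrightarrow> X = M"
  proof (intro allI impI)
    fix X assume X: "X \<subseteq> M" "closedb X" "X \<noteq> {}" "P X"
    then have "X \<in> S" using MS S_def by auto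
    then have "- X \<in> uminus ` S" by blast
    moreover have "M' \<subseteq> - X" using X M_def by auto
    ultimately have "- X = M'" using Mmax by blast
    then show "X = M" using M_def by auto
  qed
  then show ?thesis using MS S_def by blast
qed

definition Bx :: "nat set set \<Rightarrow> nat set \<Rightarrow> nat set" where
  "Bx x A = {n. shift A n \<in> x}"

lemma uplus_Bx: "A \<in> uplus x q \<longleftrightarrow> Bx x A \<in> q" unfolding uplus_def Bx_def by simp

lemma Bx_Int: "ultrafilter_nat x \<Longrightarrow> Bx x (A \<inter> B) = Bx x A \<inter> Bx x B"
  unfolding Bx_def using uf_Int_iff by (auto simp: shift_Int)
lemma Bx_compl: "ultrafilter_nat x \<Longrightarrow> Bx x (- A) = - Bx x A"
  unfolding Bx_def using uf_compl by (auto simp: shift_compl)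
lemma Bx_UNIV: "ultrafilter_nat x \<Longrightarrow> Bx x UNIV = UNIV"
  unfolding Bx_def using uf_UNIV by (auto simp: shift_UNIV)

lemma image_closed:
  assumes x: "ultrafilter_nat x" and T: "closedb T"
  shows "closedb ((\<lambda>q. uplus x q) ` T)"
  unfolding closedb_def
proof (intro conjI allI impI)
  show "(\<lambda>q. uplus x q) ` T \<subseteq> betaN" using T x uplus_uf closedb_uf betaN_iff by blast
  fix p assume p: "ultrafilter_nat p" "fam ((\<lambda>q. uplus x q) ` T) \<subseteq> p"
  define G where "G = {F \<inter> Bx x A | F A. F \<in> fam T \<and> A \<in> p}"
  have UT: "UNIV \<in> fam T" using T UNIV_fam by blast
  have "\<exists>q. ultrafilter_nat q \<and> G \<subseteq> q"
  proof (rule ultra_ext)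
    show "G \<noteq> {}" using UT uf_UNIV[OF p(1)] G_def by blast
    show "{} \<notin> G"
    proof
      assume "{} \<in> G"
      then obtain F A where FA: "F \<in> fam T" "A \<in> p" "F \<inter> Bx x A = {}" using G_def by blast
      have "- A \<in> fam ((\<lambda>q. uplus x q) ` T)"
        unfolding fam_def
      proof (safe)
        fix q assume q: "q \<in> T"
        then have uq: "ultrafilter_nat q" using T closedb_uf by blast
        have "F \<in> q" using FA q fam_def by blast
        then have "Bx x A \<notin> q" using FA uq uf_Int uf_empty by metis
        then have "Bx x (- A) \<in> q" using Bx_compl[OF x] uf_compl[OF uq] by simp
        then show "- A \<in> uplus x q" using uplus_Bx by blast
      qed
      then have "- A \<in> p" using p by blast
      then show False using FA uf_compl[OF p(1)] by blast
    qed
    fix C D assume "C \<in> G" "D \<in> G"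
    then obtain F1 A1 F2 A2 where FA: "F1 \<in> fam T" "A1 \<in> p" "C = F1 \<inter> Bx x A1"
       "F2 \<in> fam T" "A2 \<in> p" "D = F2 \<inter> Bx x A2" using G_def by blast
    have "F1 \<inter> F2 \<in> fam T" using FA T fam_Int by blast
    moreover have "A1 \<inter> A2 \<in> p" using FA p uf_Int by blast
    ultimately have "(F1 \<inter> F2) \<inter> Bx x (A1 \<inter> A2) \<in> G" using G_def by blast
    moreover have "(F1 \<inter> F2) \<inter> Bx x (A1 \<inter> A2) \<subseteq> C \<inter> D" using FA Bx_Int[OF x] by auto
    ultimately show "\<exists>E\<in>G. E \<subseteq> C \<inter> D" by blast
  qed
  then obtain q where q: "ultrafilter_nat q" "G \<subseteq> q" by blast
  have "fam T \<subseteq> q"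
  proof
    fix F assume "F \<in> fam T"
    then have "F \<inter> Bx x UNIV \<in> G" using G_def uf_UNIV[OF p(1)] by blast
    then show "F \<in> q" using q Bx_UNIV[OF x] by auto
  qed
  then have qT: "q \<in> T" using T q closedbD by blast
  have "p \<subseteq> uplus x q"
  proof
    fix A assume "A \<in> p"
    then have "UNIV \<inter> Bx x A \<in> G" using G_def UT by blast
    then show "A \<in> uplus x q" using q uplus_Bx by auto
  qed
  then have "p = uplus x q" using uf_eq p(1) uplus_uf[OF x q(1)] by blast
  then show "p \<in> (\<lambda>q. uplus x q) ` T" using qT by blast
qed

lemma stab_closed:
  assumes x: "ultrafilter_nat x" and T: "closedb T"
  shows "closedb {y\<in>T. uplus x y = x}"
  unfolding closedb_def
proof (intro conjI allI impI)
  show "{y\<in>T. uplus x y = x} \<subseteq> betaN" using T closedb_def by blast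
  fix p assume p: "ultrafilter_nat p" "fam {y\<in>T. uplus x y = x} \<subseteq> p"
  have "fam T \<subseteq> p" using p fam_anti[of "{y\<in>T. uplus x y = x}" T] by blast
  then have pT: "p \<in> T" using T p closedbD by blast
  have "x \<subseteq> uplus x p"
  proof
    fix A assume A: "A \<in> x"
    have "Bx x A \<in> fam {y\<in>T. uplus x y = x}" unfolding fam_def using A uplus_Bx by auto
    then show "A \<in> uplus x p" using p uplus_Bx by blast
  qed
  then have "uplus x p = x" using uf_eq x uplus_uf[OF x p(1)] by metis
  then show "p \<in> {y\<in>T. uplus x y = x}" using pT by blast
qed

lemma ellis:
  assumes T: "closedb T" "T \<noteq> {}" and sg: "\<forall>a\<in>T. \<forall>b\<in>T. uplus a b \<in> T"
  shows "\<exists>e\<in>T. uplus e e = e"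
proof -
  let ?P = "\<lambda>X. \<forall>a\<in>X. \<forall>b\<in>X. uplus a b \<in> X"
  have "\<exists>M. M \<subseteq> T \<and> closedb M \<and> M \<noteq> {} \<and> ?P M \<and>
            (\<forall>X. X \<subseteq> M \<longrightarrow> closedb X \<longrightarrow> X \<noteq> {} \<longrightarrow> ?P X \<longrightarrow> X = M)"
    by (rule min_closed[where P = ?P, OF T sg]) blast
  then obtain M where M: "M \<subseteq> T" "closedb M" "M \<noteq> {}" "?P M"
    and Mmin: "\<forall>X. X \<subseteq> M \<longrightarrow> closedb X \<longrightarrow> X \<noteq> {} \<longrightarrow> ?P X \<longrightarrow> X = M" by blast
  obtain x where xM: "x \<in> M" using M by blast
  have ux: "ultrafilter_nat x" using xM M closedb_uf by blast
  have "(\<lambda>q. uplus x q) ` M \<subseteq> M \<and> closedb ((\<lambda>q. uplus x q) ` M) \<and> (\<lambda>q. uplus x q) ` M \<noteq> {} \<and> ?P ((\<lambda>q. uplus x q) ` M)"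
  proof (intro conjI)
    show "(\<lambda>q. uplus x q) ` M \<subseteq> M" using M xM by blast
    show "closedb ((\<lambda>q. uplus x q) ` M)" using image_closed[OF ux M(2)] .
    show "(\<lambda>q. uplus x q) ` M \<noteq> {}" using M by blast
    show "?P ((\<lambda>q. uplus x q) ` M)"
    proof (intro ballI)
      fix a b assume "a \<in> (\<lambda>q. uplus x q) ` M" "b \<in> (\<lambda>q. uplus x q) ` M"
      then obtain a' b' where ab: "a' \<in> M" "b' \<in> M" "a = uplus x a'" "b = uplus x b'" by blast
      then have "uplus a b = uplus x (uplus a' (uplus x b'))" by (simp add: uplus_assoc)
      moreover have "uplus a' (uplus x b') \<in> M" using ab M xM by blast
      ultimately show "uplus a b \<in> (\<lambda>q. uplus x q) ` M" by blast
    qed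
  qed
  then have "(\<lambda>q. uplus x q) ` M = M"
    using mp[OF mp[OF mp[OF mp[OF spec[OF Mmin, of "(\<lambda>q. uplus x q) ` M"]]]]] by (elim conjE)
  then have "{y\<in>M. uplus x y = x} \<noteq> {}" using xM by (metis (mono_tags, lifting) empty_iff image_iff mem_Collect_eq)
  have "{y\<in>M. uplus x y = x} \<subseteq> M \<and> closedb {y\<in>M. uplus x y = x} \<and> {y\<in>M. uplus x y = x} \<noteq> {} \<and> ?P {y\<in>M. uplus x y = x}"
  proof (intro conjI)
    show "{y\<in>M. uplus x y = x} \<subseteq> M" by blast
    show "closedb {y\<in>M. uplus x y = x}" using stab_closed[OF ux M(2)] .
    show "{y\<in>M. uplus x y = x} \<noteq> {}" by fact
    show "?P {y\<in>M. uplus x y = x}"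
    proof (intro ballI)
      fix a b assume "a \<in> {y\<in>M. uplus x y = x}" "b \<in> {y\<in>M. uplus x y = x}"
      then show "uplus a b \<in> {y\<in>M. uplus x y = x}" using M
        by (metis (mono_tags, lifting) mem_Collect_eq uplus_assoc)
    qed
  qed
  then have "{y\<in>M. uplus x y = x} = M"
    using mp[OF mp[OF mp[OF mp[OF spec[OF Mmin, of "{y\<in>M. uplus x y = x}"]]]]] by (elim conjE)
  then have "uplus x x = x" using xM by blast
  then show ?thesis using xM M by blast
qed



lemma I0_ideal: "two_sided_ideal {q\<in>betaN. \<forall>k. {k..} \<in> q}"
  unfolding two_sided_ideal_def
proof (intro conjI ballI)
  have "\<exists>p. ultrafilter_nat p \<and> range (\<lambda>k::nat. {k..}) \<subseteq> p"
  proof (rule ultra_ext)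
    show "range (\<lambda>k::nat. {k..}) \<noteq> {}" by blast
    show "{} \<notin> range (\<lambda>k::nat. {k..})" by auto
    fix A B assume "A \<in> range (\<lambda>k::nat. {k..})" "B \<in> range (\<lambda>k::nat. {k..})"
    then obtain a b where "A = {a..}" "B = {b..}" by blast
    then have "{max a b..} \<subseteq> A \<inter> B" by auto
    then show "\<exists>C\<in>range (\<lambda>k::nat. {k..}). C \<subseteq> A \<inter> B" by blast
  qed
  then show "{q\<in>betaN. \<forall>k. {k..} \<in> q} \<noteq> {}" by (auto simp: betaN_iff)
  show "{q\<in>betaN. \<forall>k. {k..} \<in> q} \<subseteq> betaN" by blast
  fix p q assume p: "p \<in> betaN" and q: "q \<in> {q\<in>betaN. \<forall>k. {k..} \<in> q}"
  have up: "ultrafilter_nat p" and uq: "ultrafilter_nat q" using p q betaN_iff by auto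
  have "\<forall>k. {k..} \<in> uplus p q"
  proof
    fix k
    have "{k..} \<subseteq> {n. shift {k..} n \<in> p}"
    proof
      fix n assume "n \<in> {k::nat..}"
      then have "shift {k..} n = UNIV" by (auto simp: shift_def)
      then show "n \<in> {n. shift {k..} n \<in> p}" using uf_UNIV[OF up] by simp
    qed
    then show "{k..} \<in> uplus p q" using q uf_mono[OF uq] unfolding uplus_def by blast
  qed
  then show "uplus p q \<in> {q\<in>betaN. \<forall>k. {k..} \<in> q}" using uplus_uf[OF up uq] betaN_iff by blast
  have "\<forall>k. {k..} \<in> uplus q p"
  proof
    fix k
    have "{n. shift {k..} n \<in> q} = UNIV"
    proof safe
      fix n
      have "{k..} \<subseteq> shift {k..} n" by (auto simp: shift_def)
      then show "shift {k..} n \<in> q" using q uf_mono[OF uq] by blast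
    qed simp
    then show "{k..} \<in> uplus q p" using uf_UNIV[OF up] unfolding uplus_def by simp
  qed
  then show "uplus q p \<in> {q\<in>betaN. \<forall>k. {k..} \<in> q}" using uplus_uf[OF uq up] betaN_iff by blast
qed

lemma idealD: assumes "two_sided_ideal I"
  shows "I \<noteq> {}" "I \<subseteq> betaN" "p \<in> betaN \<Longrightarrow> q \<in> I \<Longrightarrow> uplus p q \<in> I"
    "p \<in> betaN \<Longrightarrow> q \<in> I \<Longrightarrow> uplus q p \<in> I"
  using assms unfolding two_sided_ideal_def by blast+

lemma exists_minidem: "\<exists>e. minimal_idempotent e"
proof -
  let ?P = "\<lambda>X. \<forall>a\<in>X. \<forall>b\<in>betaN. uplus a b \<in> X"
  have bne: "betaN \<noteq> {}" using pr_uf betaN_iff by blast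
  have Pb: "?P betaN" using uplus_uf betaN_iff by blast
  have "\<exists>M. M \<subseteq> betaN \<and> closedb M \<and> M \<noteq> {} \<and> ?P M \<and>
            (\<forall>X. X \<subseteq> M \<longrightarrow> closedb X \<longrightarrow> X \<noteq> {} \<longrightarrow> ?P X \<longrightarrow> X = M)"
    by (rule min_closed[where P = ?P, OF closedb_betaN bne Pb]) blast
  then obtain R where R: "R \<subseteq> betaN" "closedb R" "R \<noteq> {}" "?P R"
    and Rmin: "\<forall>X. X \<subseteq> R \<longrightarrow> closedb X \<longrightarrow> X \<noteq> {} \<longrightarrow> ?P X \<longrightarrow> X = R" by blast
  have "\<forall>a\<in>R. \<forall>b\<in>R. uplus a b \<in> R" using R by blast
  then obtain e where eR: "e \<in> R" and ee: "uplus e e = e" using ellis[OF R(2) R(3)] by blast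
  have ue: "ultrafilter_nat e" using closedb_uf[OF R(2) eR] .
  have inI: "e \<in> I" if I: "two_sided_ideal I" for I
  proof -
    obtain q where qI: "q \<in> I" using idealD(1)[OF I] by blast
    have qb: "q \<in> betaN" using qI idealD(2)[OF I] by blast
    have eb: "e \<in> betaN" using ue betaN_iff by blast
    have eqI: "uplus e q \<in> I" using idealD(3)[OF I eb qI] .
    have eqR: "uplus e q \<in> R" using eR qb R(4) by blast
    have ueq: "ultrafilter_nat (uplus e q)" using closedb_uf[OF R(2) eqR] .
    let ?R' = "(\<lambda>s. uplus (uplus e q) s) ` betaN"
    have "?R' \<subseteq> R \<and> closedb ?R' \<and> ?R' \<noteq> {} \<and> ?P ?R'"
    proof (intro conjI)
      show "?R' \<subseteq> R" using eqR R(4) by blast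
      show "closedb ?R'" by (rule image_closed[OF ueq closedb_betaN])
      show "?R' \<noteq> {}" using bne by blast
      show "?P ?R'"
      proof (intro ballI)
        fix a b assume "a \<in> ?R'" "b \<in> betaN"
        then obtain s where s: "s \<in> betaN" "a = uplus (uplus e q) s" by blast
        then have "uplus a b = uplus (uplus e q) (uplus s b)" by (simp add: uplus_assoc)
        moreover have "uplus s b \<in> betaN" using s \<open>b \<in> betaN\<close> uplus_uf betaN_iff by blast
        ultimately show "uplus a b \<in> ?R'" by blast
      qed
    qed
    then have "?R' = R"
      using mp[OF mp[OF mp[OF mp[OF spec[OF Rmin, of ?R']]]]] by (elim conjE)
    then obtain s where s: "s \<in> betaN" "e = uplus (uplus e q) s" using eR by (metis imageE)
    have "uplus (uplus e q) s \<in> I" using idealD(4)[OF I s(1) eqI] .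
    then show "e \<in> I" using s by simp
  qed
  then have eK: "e \<in> smallest_ideal" unfolding smallest_ideal_def by blast
  have "e \<in> {q\<in>betaN. \<forall>k. {k..} \<in> q}" using inI[OF I0_ideal] .
  then have "\<forall>n. {n} \<notin> e"
  proof (intro allI notI)
    fix n assume a: "e \<in> {q\<in>betaN. \<forall>k. {k..} \<in> q}" and b: "{n} \<in> e"
    then have "{Suc n..} \<in> e" by blast
    then have "{n} \<inter> {Suc n..} \<in> e" using b uf_Int[OF ue] by blast
    then show False using uf_empty[OF ue] by simp
  qed
  then have "minimal_idempotent e"
    unfolding minimal_idempotent_def nonprincipal_def using ue ee eK betaN_iff by blast
  then show ?thesis by blast
qed



definition mul :: "nat \<Rightarrow> nat set set \<Rightarrow> nat set set" where
  "mul a p = {B. {x. a * x \<in> B} \<in> p}"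

lemma mul_uf: assumes p: "ultrafilter_nat p" shows "ultrafilter_nat (mul a p)"
  unfolding ultrafilter_nat_def mul_def
proof (intro conjI allI impI; simp?)
  show "UNIV \<in> p" using uf_UNIV[OF p] .
  show "{} \<notin> p" using uf_empty[OF p] .
next
  fix A B assume "{x. a * x \<in> A} \<in> p \<and> A \<subseteq> B"
  then have "{x. a * x \<in> A} \<in> p" "{x. a * x \<in> A} \<subseteq> {x. a * x \<in> B}" by auto
  then show "{x. a * x \<in> B} \<in> p" by (rule uf_mono[OF p])
next
  fix A B assume "{x. a * x \<in> A} \<in> p \<and> {x. a * x \<in> B} \<in> p"
  then have "{x. a * x \<in> A} \<inter> {x. a * x \<in> B} \<in> p" using uf_Int[OF p] by blast
  moreover have "{x. a * x \<in> A} \<inter> {x. a * x \<in> B} = {x. a * x \<in> A \<and> a * x \<in> B}" by blast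
  ultimately show "{x. a * x \<in> A \<and> a * x \<in> B} \<in> p" by simp
next
  fix A
  have "{x. a * x \<notin> A} = - {x. a * x \<in> A}" by blast
  then show "{x. a * x \<in> A} \<in> p \<or> {x. a * x \<notin> A} \<in> p" using uf_compl[OF p] by auto
qed

lemma mul_uplus: "mul a (uplus p q) = uplus (mul a p) (mul a q)"
  unfolding mul_def uplus_def shift_def by (simp add: algebra_simps)

lemma residue_shift:
  assumes q: "ultrafilter_nat q" and a: "a \<ge> 1"
  shows "\<exists>c. {x. a dvd x} \<in> uplus q (pr c)"
proof -
  have "\<Union>((\<lambda>j. {x. x mod a = j}) ` {..<a}) = UNIV" using a by auto
  then obtain j where j: "j < a" "{x. x mod a = j} \<in> q"
    using uf_finite_Union[of "(\<lambda>j. {x. x mod a = j}) ` {..<a}" q] q uf_UNIV by force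
  have "{x. x mod a = j} \<subseteq> shift {x. a dvd x} (a - j)"
  proof
    fix x assume "x \<in> {x. x mod a = j}"
    then have "x mod a = j" by simp
    then have "x = a * (x div a) + j" by (metis div_mult_mod_eq mult.commute)
    then have "x + (a - j) = a * (x div a + 1)" using j by simp
    then show "x \<in> shift {x. a dvd x} (a - j)" unfolding shift_def by (metis dvd_triv_left mem_Collect_eq)
  qed
  then have "shift {x. a dvd x} (a - j) \<in> q" using uf_mono[OF q j(2)] by blast
  then show ?thesis by (auto simp: uplus_pr)
qed

lemma mul_preimage:
  assumes q: "ultrafilter_nat q" and a: "a \<ge> 1" and d: "{x. a dvd x} \<in> q"
  shows "\<exists>w. ultrafilter_nat w \<and> mul a w = q"
proof -
  define w where "w = {B. (\<lambda>x. a * x) ` B \<in> q}"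
  have inj: "inj (\<lambda>x. a * x)" using a by (auto simp: inj_on_def)
  have rng: "range (\<lambda>x. a * x) = {x. a dvd x}" by (auto simp: dvd_def)
  have "ultrafilter_nat w" unfolding ultrafilter_nat_def w_def
  proof (intro conjI allI impI; simp?)
    show "range ((*) a) \<in> q" using d rng by simp
    show "{} \<notin> q" using uf_empty[OF q] .
  next
    fix A B :: "nat set" assume "(*) a ` A \<in> q \<and> A \<subseteq> B"
    then have "(*) a ` A \<in> q" "(*) a ` A \<subseteq> (*) a ` B" by auto
    then show "(*) a ` B \<in> q" by (rule uf_mono[OF q])
  next
    fix A B :: "nat set" assume "(*) a ` A \<in> q \<and> (*) a ` B \<in> q"
    then have "(*) a ` A \<inter> (*) a ` B \<in> q" using uf_Int[OF q] by blast
    then show "(*) a ` (A \<inter> B) \<in> q" using image_Int[OF inj] by simp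
  next
    fix A :: "nat set"
    show "(*) a ` A \<in> q \<or> (*) a ` (- A) \<in> q"
    proof (cases "(*) a ` A \<in> q")
      case False
      then have "- ((*) a ` A) \<in> q" using uf_compl[OF q] by blast
      then have "- ((*) a ` A) \<inter> {x. a dvd x} \<in> q" using d uf_Int[OF q] by blast
      moreover have "- ((*) a ` A) \<inter> {x. a dvd x} \<subseteq> (*) a ` (- A)" using rng by (auto simp: dvd_def)
      ultimately have "(*) a ` (- A) \<in> q" by (rule uf_mono[OF q])
      then show ?thesis by blast
    qed simp
  qed
  moreover have "mul a w = q"
  proof -
    have "(\<lambda>x. a * x) ` {x. a * x \<in> B} = B \<inter> {x. a dvd x}" for B by (auto simp: dvd_def)
    then have "mul a w = {B. B \<inter> {x. a dvd x} \<in> q}" unfolding mul_def w_def by simp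
    also have "\<dots> = q" using uf_Int_iff[OF q] d by auto
    finally show ?thesis .
  qed
  ultimately show ?thesis by blast
qed

lemma J_ideal:
  assumes w: "w \<in> betaN"
  shows "two_sided_ideal {uplus (uplus u w) v | u v. u \<in> betaN \<and> v \<in> betaN}"
  unfolding two_sided_ideal_def
proof (intro conjI ballI)
  have uw: "ultrafilter_nat w" using w betaN_iff by blast
  show "{uplus (uplus u w) v | u v. u \<in> betaN \<and> v \<in> betaN} \<noteq> {}" using w by blast
  show "{uplus (uplus u w) v | u v. u \<in> betaN \<and> v \<in> betaN} \<subseteq> betaN"
    using uplus_uf uw by (auto simp: betaN_iff)
  fix p q assume p: "p \<in> betaN" and q: "q \<in> {uplus (uplus u w) v | u v. u \<in> betaN \<and> v \<in> betaN}"
  then obtain u v where uv: "u \<in> betaN" "v \<in> betaN" "q = uplus (uplus u w) v" by blast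
  have "uplus p q = uplus (uplus (uplus p u) w) v" using uv by (simp add: uplus_assoc)
  moreover have "uplus p u \<in> betaN" using p uv uplus_uf by (auto simp: betaN_iff)
  ultimately show "uplus p q \<in> {uplus (uplus u w) v | u v. u \<in> betaN \<and> v \<in> betaN}" using uv by blast
  have "uplus q p = uplus (uplus u w) (uplus v p)" using uv by (simp add: uplus_assoc)
  moreover have "uplus v p \<in> betaN" using p uv uplus_uf by (auto simp: betaN_iff)
  ultimately show "uplus q p \<in> {uplus (uplus u w) v | u v. u \<in> betaN \<and> v \<in> betaN}" using uv by blast
qed

lemma mul_minidem:
  assumes p: "minimal_idempotent p" and a: "a \<ge> 1"
  shows "minimal_idempotent (mul a p)"
proof -
  have up: "ultrafilter_nat p" and np: "nonprincipal p" and pp: "uplus p p = p" and pK: "p \<in> smallest_ideal"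
    using p unfolding minimal_idempotent_def betaN_iff by auto
  have um: "ultrafilter_nat (mul a p)" using mul_uf[OF up] .
  have "nonprincipal (mul a p)" unfolding nonprincipal_def
  proof (intro allI notI)
    fix n assume "{n} \<in> mul a p"
    then have S: "{x. a * x = n} \<in> p" unfolding mul_def by simp
    have "{x. a * x = n} \<subseteq> {n div a}" using a by auto
    then have "{x. a * x = n} = {} \<or> {x. a * x = n} = {n div a}" by (rule subset_singletonD)
    then show False
    proof
      assume "{x. a * x = n} = {}" then show False using S uf_empty[OF up] by simp
    next
      assume "{x. a * x = n} = {n div a}" then show False using S np unfolding nonprincipal_def by simp
    qed
  qed
  moreover have "uplus (mul a p) (mul a p) = mul a p" using pp mul_uplus by metis
  moreover have "mul a p \<in> smallest_ideal" unfolding smallest_ideal_def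
  proof (intro InterI, simp)
    fix I assume I: "two_sided_ideal I"
    obtain q where qI: "q \<in> I" using idealD(1)[OF I] by blast
    have uq: "ultrafilter_nat q" using qI idealD(2)[OF I] betaN_iff by blast
    obtain c where c: "{x. a dvd x} \<in> uplus q (pr c)" using residue_shift[OF uq a] by blast
    have uqc: "ultrafilter_nat (uplus q (pr c))" using uplus_uf[OF uq pr_uf] .
    have qcI: "uplus q (pr c) \<in> I" using idealD(4)[OF I _ qI] pr_uf betaN_iff by blast
    obtain w where w: "ultrafilter_nat w" "mul a w = uplus q (pr c)" using mul_preimage[OF uqc a c] by blast
    have "p \<in> {uplus (uplus u w) v | u v. u \<in> betaN \<and> v \<in> betaN}"
      using pK J_ideal[of w] w betaN_iff unfolding smallest_ideal_def by blast
    then obtain u v where uv: "u \<in> betaN" "v \<in> betaN" "p = uplus (uplus u w) v" by blast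
    then have "mul a p = uplus (uplus (mul a u) (uplus q (pr c))) (mul a v)" using w by (simp add: mul_uplus)
    moreover have "mul a u \<in> betaN" "mul a v \<in> betaN" using uv mul_uf betaN_iff by auto
    ultimately show "mul a p \<in> I" using idealD(3)[OF I] idealD(4)[OF I] qcI by simp
  qed
  ultimately show ?thesis unfolding minimal_idempotent_def using um betaN_iff by blast
qed

lemma idem_dvd:
  assumes p: "ultrafilter_nat p" and pp: "uplus p p = p" and m: "m \<ge> 1"
  shows "{x. m dvd x} \<in> p"
proof -
  have "\<Union>((\<lambda>j. {x. x mod m = j}) ` {..<m}) = UNIV" using m by auto
  then obtain j where j: "j < m" "{x. x mod m = j} \<in> p"
    using uf_finite_Union[of "(\<lambda>j. {x. x mod m = j}) ` {..<m}" p] p uf_UNIV by force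
  then have "{x. x mod m = j} \<in> uplus p p" using pp by simp
  then have S: "{n. shift {x. x mod m = j} n \<in> p} \<in> p" unfolding uplus_def by simp
  have "{n. shift {x. x mod m = j} n \<in> p} \<subseteq> {x. m dvd x}"
  proof
    fix n assume "n \<in> {n. shift {x. x mod m = j} n \<in> p}"
    then have "shift {x. x mod m = j} n \<inter> {x. x mod m = j} \<noteq> {}" using j(2) uf_disj[OF p] by blast
    then obtain x where "(x + n) mod m = j" "x mod m = j" unfolding shift_def by blast
    then have "(x + n) mod m = x mod m" by simp
    then have "x mod m = (x + n) mod m" by simp
    then have "m dvd (x + n) - x" using mod_eq_dvd_iff_nat[of x "x + n" m] by simp
    then show "n \<in> {x. m dvd x}" by simp
  qed
  then show ?thesis using uf_mono[OF p S] by blast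
qed



definition kk :: "nat \<Rightarrow> nat \<Rightarrow> nat" where "kk N x = (LEAST k. N < x mod 2^k)"
definition col :: "nat \<Rightarrow> nat \<Rightarrow> nat \<Rightarrow> nat" where
  "col r N x = (if x \<le> N then 1 else kk N x mod r + 1)"

lemma mod_add_dvd: "(m::nat) dvd b \<Longrightarrow> (a + b) mod m = a mod m"
  by (metis dvd_def mod_mult_self2 mult.commute)

lemma kk_le: "N < n \<Longrightarrow> kk N n \<le> n \<and> N < n mod 2 ^ kk N n \<and> (\<forall>k < kk N n. \<not> N < n mod 2^k)"
proof -
  assume "N < n"
  moreover have "n < 2^n" by (rule less_exp)
  ultimately have P: "N < n mod 2^n" by simp
  show ?thesis unfolding kk_def using Least_le[of "\<lambda>k. N < n mod 2^k", OF P] LeastI[of "\<lambda>k. N < n mod 2^k", OF P]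
    not_less_Least[of _ "\<lambda>k. N < n mod 2^k"] by blast
qed

lemma col_big:
  assumes n: "N < n" and y: "2^n dvd y"
  shows "col r N (n + y) = col r N n"
proof -
  obtain k0 where k0: "k0 = kk N n" by blast
  have K: "k0 \<le> n" "N < n mod 2^k0" "\<forall>k < k0. \<not> N < n mod 2^k" using kk_le[OF n] k0 by auto
  have eq: "(n + y) mod 2^k = n mod 2^k" if "k \<le> n" for k
  proof -
    have "(2::nat)^k dvd 2^n" using that by (simp add: le_imp_power_dvd)
    then have "2^k dvd y" using y dvd_trans by blast
    then show ?thesis by (rule mod_add_dvd)
  qed
  have "kk N (n + y) = k0" unfolding kk_def
  proof (rule Least_equality)
    show "N < (n + y) mod 2 ^ k0" using K eq by simp
    fix k assume "N < (n + y) mod 2 ^ k"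
    then show "k0 \<le> k" using K eq by (metis le_trans nat_le_linear not_less)
  qed
  then show ?thesis unfolding col_def using n k0 by simp
qed

lemma col_small:
  assumes n: "n \<le> N" and K: "N < 2^K" and k: "K \<le> k"
  shows "col r N (n + 2^k * (2*t+1)) = (k + 1) mod r + 1"
proof -
  let ?y = "2^k * (2*t+1) :: nat"
  have pk: "(2::nat)^K \<le> 2^k" using k by simp
  have big: "N < 2^k" using K pk by linarith
  have ny: "N < n + ?y" using big by (simp add: add.commute trans_less_add1)
  have eq: "(n + ?y) mod 2^j = n mod 2^j" if "j \<le> k" for j
  proof -
    have "(2::nat)^j dvd 2^k" using that by (simp add: le_imp_power_dvd)
    then have "2^j dvd ?y" by (rule dvd_mult2)
    then show ?thesis by (rule mod_add_dvd)
  qed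
  have top: "(n + ?y) mod 2^(k+1) = n + 2^k"
  proof -
    have e: "n + ?y = (n + 2^k) + 2^(k+1) * t" by (simp add: algebra_simps)
    have "(n + ?y) mod 2^(k+1) = (n + 2^k) mod 2^(k+1)" unfolding e by (rule mod_add_dvd) simp
    also have "\<dots> = n + 2^k" using n big by simp
    finally show ?thesis .
  qed
  have "kk N (n + ?y) = k + 1" unfolding kk_def
  proof (rule Least_equality)
    show "N < (n + ?y) mod 2 ^ (k + 1)" using top big by simp
    fix j assume j: "N < (n + ?y) mod 2 ^ j"
    show "k + 1 \<le> j"
    proof (rule ccontr)
      assume "\<not> k + 1 \<le> j"
      then have "j \<le> k" by simp
      then have "(n + ?y) mod 2^j = n mod 2^j" by (rule eq)
      moreover have "n mod 2^j \<le> n" by simp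
      ultimately show False using j n by linarith
    qed
  qed
  then show ?thesis unfolding col_def using ny by simp
qed

lemma odd_decomp: "(y::nat) > 0 \<Longrightarrow> \<exists>k t. y = 2^k * (2*t+1)"
proof (induction y rule: less_induct)
  case (less y)
  show ?case
  proof (cases "even y")
    case True
    then obtain z where z: "y = 2 * z" by blast
    then have "z < y" "z > 0" using less.prems by auto
    then obtain k t where "z = 2^k * (2*t+1)" using less.IH by blast
    then have "y = 2^(k+1) * (2*t+1)" using z by simp
    then show ?thesis by blast
  next
    case False
    then have "y = 2^0 * (2 * (y div 2) + 1)" by simp
    then show ?thesis by blast
  qed
qed

lemma k_ge: assumes "(2::nat)^K dvd 2^k * (2*t+1)" shows "K \<le> k"
proof (rule ccontr)
  assume "\<not> K \<le> k"
  then have kK: "k < K" by simp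
  then have "(2::nat)^K = 2^k * 2^(K-k)" by (simp add: power_add[symmetric])
  then have "2^k * 2^(K-k) dvd (2::nat)^k * (2*t+1)" using assms by simp
  then have "2^(K-k) dvd (2*t+1::nat)" by (rule dvd_mult_cancel) simp
  moreover have "(2::nat) dvd 2^(K-k)" using kK by simp
  ultimately have "(2::nat) dvd 2*t+1" using dvd_trans by blast
  then show False by simp
qed

theorem theorem6:
  fixes r N :: nat
  assumes "r \<ge> 1" and "N \<ge> 1"
  shows "\<exists>A :: nat \<Rightarrow> nat set.
           (\<Union>i\<in>{1..r}. A i) = UNIV \<and>
           (\<forall>i\<in>{1..r}. \<forall>j\<in>{1..r}. i \<noteq> j \<longrightarrow> A i \<inter> A j = {}) \<and>
           (\<forall>i\<in>{1..r}. \<forall>n\<in>{1..N}. central (shift (A i) n)) \<and>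
           (\<forall>n. n > N \<longrightarrow> (\<exists>!i. i \<in> {1..r} \<and> central (shift (A i) n)))"
proof -
  have r: "r \<ge> 1" using assms by simp
  define A where "A = (\<lambda>i. {x. col r N x = i})"
  obtain p where p: "minimal_idempotent p" using exists_minidem by blast
  have colr: "col r N x \<in> {1..r}" for x
  proof -
    have "kk N x mod r < r" using r by simp
    then have "kk N x mod r + 1 \<le> r" by linarith
    then show ?thesis using r unfolding col_def by simp
  qed
  have mi_uf: "ultrafilter_nat q" "uplus q q = q" if "minimal_idempotent q" for q
    using that unfolding minimal_idempotent_def betaN_iff by auto
  have P1: "(\<Union>i\<in>{1..r}. A i) = UNIV" using colr unfolding A_def by blast
  have P2: "\<forall>i\<in>{1..r}. \<forall>j\<in>{1..r}. i \<noteq> j \<longrightarrow> A i \<inter> A j = {}" unfolding A_def by blast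
  have P3: "central (shift (A i) n)" if i: "i \<in> {1..r}" and n: "n \<in> {1..N}" for i n
  proof -
    define V where "V = (\<lambda>c. {y::nat. \<exists>k t. y = 2^k * (2*t+1) \<and> k mod r = c})"
    have up: "ultrafilter_nat p" using mi_uf[OF p] by blast
    have "{0} \<notin> p" using p unfolding minimal_idempotent_def nonprincipal_def by blast
    then have "- {0} \<in> p" using uf_compl[OF up] by blast
    moreover have "- {0} = \<Union>(V ` {..<r})"
    proof (intro equalityI subsetI)
      fix y :: nat assume "y \<in> - {0}"
      then have "y > 0" by simp
      then obtain k t where "y = 2^k * (2*t+1)" using odd_decomp by blast
      then have "y \<in> V (k mod r)" unfolding V_def by blast
      moreover have "k mod r < r" using r by simp
      ultimately show "y \<in> \<Union>(V ` {..<r})" by blast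
    next
      fix y assume "y \<in> \<Union>(V ` {..<r})"
      then obtain c where "y \<in> V c" by blast
      then show "y \<in> - {0}" unfolding V_def by auto
    qed
    ultimately obtain c where c: "c < r" "V c \<in> p"
      using uf_finite_Union[of "V ` {..<r}" p] up by auto
    define j where "j = (i - 1) + (r - 1 - c)"
    define q where "q = mul (2^j) p"
    have q: "minimal_idempotent q" unfolding q_def by (rule mul_minidem[OF p]) simp
    have uq: "ultrafilter_nat q" and qq: "uplus q q = q" using mi_uf[OF q] by auto
    have "V c \<subseteq> {x. 2^j * x \<in> V ((c + j) mod r)}"
    proof
      fix x assume "x \<in> V c"
      then obtain k t where kt: "x = 2^k * (2*t+1)" "k mod r = c" unfolding V_def by blast
      then have "2^j * x = 2^(k+j) * (2*t+1)" by (simp add: power_add algebra_simps)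
      moreover have "(k + j) mod r = (c + j) mod r" using kt(2) by (metis mod_add_left_eq)
      ultimately show "x \<in> {x. 2^j * x \<in> V ((c + j) mod r)}" unfolding V_def by blast
    qed
    then have "V ((c + j) mod r) \<in> q" using uf_mono[OF up c(2)] unfolding q_def mul_def by blast
    moreover have "{x. 2^N dvd x} \<in> q" using idem_dvd[OF uq qq] by simp
    ultimately have I: "V ((c + j) mod r) \<inter> {x. 2^N dvd x} \<in> q" using uf_Int[OF uq] by blast
    have "V ((c + j) mod r) \<inter> {x. 2^N dvd x} \<subseteq> shift (A i) n"
    proof
      fix y assume "y \<in> V ((c + j) mod r) \<inter> {x. 2^N dvd x}"
      then obtain k t where kt: "y = 2^k * (2*t+1)" "k mod r = (c + j) mod r" "2^N dvd y"
        unfolding V_def by blast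
      then have kN: "N \<le> k" using k_ge by blast
      have nN: "n \<le> N" using n by simp
      have "N < 2^N" by (rule less_exp)
      then have "col r N (n + y) = (k + 1) mod r + 1" using col_small[OF nN _ kN] kt by blast
      also have "(k + 1) mod r = (c + j + 1) mod r" using kt by (metis mod_add_left_eq)
      also have "c + j + 1 = (i - 1) + r" using c(1) i r unfolding j_def by (simp add: atLeastAtMost_iff; arith)
      also have "((i - 1) + r) mod r = i - 1" using i by (simp only: mod_add_self2) (rule mod_less, simp add: atLeastAtMost_iff, arith)
      finally have "col r N (n + y) = i" using i by simp
      then show "y \<in> shift (A i) n" unfolding A_def shift_def by (simp add: add.commute)
    qed
    then have "shift (A i) n \<in> q" using uf_mono[OF uq I] by blast
    then show ?thesis unfolding central_def using q by blast
  qed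
  have P4: "\<exists>!i. i \<in> {1..r} \<and> central (shift (A i) n)" if n: "n > N" for n
  proof -
    have sub: "{x. 2^n dvd x} \<subseteq> shift (A (col r N n)) n"
      using col_big[OF n] unfolding A_def shift_def by (auto simp: add.commute)
    show ?thesis
    proof (rule ex1I[of _ "col r N n"])
      have up: "ultrafilter_nat p" "uplus p p = p" using mi_uf[OF p] by auto
      have "{x. 2^n dvd x} \<in> p" using idem_dvd[OF up] by simp
      then have "shift (A (col r N n)) n \<in> p" using uf_mono[OF up(1)] sub by blast
      then show "col r N n \<in> {1..r} \<and> central (shift (A (col r N n)) n)"
        using colr p unfolding central_def by blast
    next
      fix i assume "i \<in> {1..r} \<and> central (shift (A i) n)"
      then obtain q where q: "minimal_idempotent q" "shift (A i) n \<in> q" unfolding central_def by blast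
      have uq: "ultrafilter_nat q" "uplus q q = q" using mi_uf[OF q(1)] by auto
      have "{x. 2^n dvd x} \<in> q" using idem_dvd[OF uq] by simp
      then have "{x. 2^n dvd x} \<inter> shift (A i) n \<noteq> {}" using uf_disj[OF uq(1)] q(2) by blast
      then obtain y where "2^n dvd y" "col r N (n + y) = i" unfolding A_def shift_def by (auto simp: add.commute)
      then show "i = col r N n" using col_big[OF n] by simp
    qed
  qed
  show ?thesis
    apply (rule exI[of _ A])
    using P1 P2 P3 P4 by blast
qed


end
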